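(* Let $\mathbf{A}\in\mathbb{R}^{N\times N}$ have $N$ pairwise distinct real eigenvalues, $\mathbf{A}=\mathbf{R}\boldsymbol{\Lambda}\mathbf{R}^{-1}$ with $\boldsymbol{\Lambda}=\mathrm{diag}(\lambda_1,\dots,\lambda_N)$, and let $\mathbf{H}$ be symmetric positive definite with $\mathbf{H}\mathbf{A}$ symmetric. Let $x_s<x_\infty$ and let $\Gamma_s\in C^1(\mathbb{R})$ be nonincreasing, with $\Gamma_s\equiv1$ on $]-\infty,x_s]$ and $\Gamma_s$ constant on $[x_\infty,\infty[$. Define $\mathbf{S}(x)=\mathbf{R}\,\mathrm{diag}(\tilde\lambda_1(x),\dots,\tilde\lambda_N(x))\mathbf{R}^{-1}$, where $\tilde\lambda_i(x)=\lambda_i$ if $\lambda_i\le0$ and $\tilde\lambda_i(x)=\Gamma_s(x)\lambda_i$ if $\lambda_i>0$. Then for every $x\in\mathbb{R}$ the matrix $\mathbf{H}\mathbf{S}(x)$ is symmetric and $\mathbf{H}\mathbf{S}'(x)$ is symmetric negative semidefinite. Moreover, if $T>0$ and $\mathbf{q}\in C^1([0,T]\times\mathbb{R};\mathbb{R}^N)$ solves $\partial_t\mathbf{q}+\mathbf{S}(x)\partial_x\mathbf{q}=\mathbf{0}$ and there is a compact set $K\subset\mathbb{R}$ with $\mathbf{q}(t,x)=0$ for all $t\in[0,T]$, $x\notin K$, then, with $v=\tfrac12\mathbf{q}^T\mathbf{H}\mathbf{q}$, $$\frac{d}{dt}\int_{\mathbb{R}} v(t,x)\,dx=\frac12\int_{x_s}^{x_\infty}\mathbf{q}(t,x)^T\mathbf{H}\mathbf{S}'(x)\,\mathbf{q}(t,x)\,dx\le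 0\quad\text{for all }t\in[0,T].$$
   Context: $\mathbf{S}(x)$ is a "slowing-down far-field operator" that slows only the right-going (positive-speed) characteristic fields inside the sponge layer $[x_s,x_\infty]$; $v$ is the quadratic convex entropy of the linear hyperbolic system $\partial_t\mathbf{q}+\mathbf{A}\partial_x\mathbf{q}=0$. *)

theory Defs
  imports "HOL-Analysis.Analysis"
begin

definition diag_mat :: "('n::finite \<Rightarrow> real) \<Rightarrow> real^'n^'n" where
  "diag_mat d = (\<chi> i j. if i = j then d i else 0)"

definition slowed_eig :: "(real \<Rightarrow> real) \<Rightarrow> ('n::finite \<Rightarrow> real) \<Rightarrow> real \<Rightarrow> 'n \<Rightarrow> real" where
  "slowed_eig \<Gamma> lam x i = (if lam i \<le> 0 then lam i else \<Gamma> x * lam i)"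

definition slow_op :: "real^'n^'n \<Rightarrow> ('n::finite \<Rightarrow> real) \<Rightarrow> (real \<Rightarrow> real) \<Rightarrow> real \<Rightarrow> real^'n^'n" where
  "slow_op R lam \<Gamma> x = R ** diag_mat (slowed_eig \<Gamma> lam x) ** matrix_inv R"

end

theory Submission
  imports Defs
begin

lemma inv_facts:
  fixes R :: "real^'n^'n"
  assumes "invertible R"
  shows "R ** matrix_inv R = mat 1 \<and> matrix_inv R ** R = mat 1"
  using assms unfolding invertible_def matrix_inv_def by (rule someI_ex)

lemma mult_diag_right: "(M ** diag_mat d) $ i $ j = M $ i $ j * (d j :: real)"
  unfolding matrix_matrix_mult_def diag_mat_def
  by (simp add: if_distrib cong: if_cong)

lemma mult_diag_left: "(diag_mat d ** M) $ i $ j = (d i :: real) * M $ i $ j"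
  unfolding matrix_matrix_mult_def diag_mat_def
  by (simp add: if_distrib if_distribR cong: if_cong)

lemma transpose_diag: "transpose (diag_mat d) = (diag_mat d :: real^'n^'n)"
  unfolding transpose_def diag_mat_def by (simp add: vec_eq_iff)

lemma D_diag:
  fixes A R H :: "real^'n^'n"
  assumes R_inv: "invertible R" and lam_distinct: "inj lam"
    and A_diag: "A = R ** diag_mat lam ** matrix_inv R"
    and H_sym: "transpose H = H"
    and HA_sym: "transpose (H ** A) = H ** A"
    and ij: "i \<noteq> j"
  shows "(transpose R ** H ** R) $ i $ j = 0"
proof -
  let ?D = "transpose R ** H ** R"
  have AR: "A ** R = R ** diag_mat lam"
    using inv_facts[OF R_inv] by (simp add: A_diag matrix_mul_assoc[symmetric])
  have "transpose R ** (H ** A) ** R = transpose R ** transpose (H ** A) ** R"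
    using HA_sym by simp
  moreover have "transpose R ** (H ** A) ** R = ?D ** diag_mat lam"
    by (simp add: matrix_mul_assoc[symmetric] AR)
  moreover have "transpose R ** transpose (H ** A) ** R = diag_mat lam ** ?D"
  proof -
    have "transpose R ** transpose (H ** A) ** R = transpose (A ** R) ** H ** R"
      by (simp add: matrix_transpose_mul H_sym matrix_mul_assoc)
    also have "\<dots> = diag_mat lam ** ?D"
      by (simp add: AR matrix_transpose_mul transpose_diag matrix_mul_assoc)
    finally show ?thesis .
  qed
  ultimately have "?D ** diag_mat lam = diag_mat lam ** ?D" by simp
  hence "?D $ i $ j * lam j = lam i * ?D $ i $ j"
    by (metis mult_diag_right mult_diag_left)
  moreover have "lam i \<noteq> lam j" using lam_distinct ij by (meson injD)
  ultimately show ?thesis by (metis mult.commute mult_cancel_left)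
qed

lemma dot_transpose: "(y::real^'n) \<bullet> (transpose B *v w) = (B *v y) \<bullet> (w::real^'n)"
  by (metis dot_lmul_matrix vector_transpose_matrix)

lemma dot_vmul: "(y::real^'n) \<bullet> (w v* B) = (B *v y) \<bullet> (w::real^'n)"
  by (metis dot_transpose transpose_matrix_vector)

lemma D_sym:
  fixes R H :: "real^'n^'n"
  assumes "transpose H = H"
  shows "transpose (transpose R ** H ** R) = transpose R ** H ** R"
  using assms by (simp add: matrix_transpose_mul matrix_mul_assoc)

lemma H_repr:
  fixes R H :: "real^'n^'n"
  assumes R_inv: "invertible R"
  shows "H ** (R ** M ** matrix_inv R) = transpose (matrix_inv R) ** ((transpose R ** H ** R) ** M) ** matrix_inv R"
proof -
  have "transpose (matrix_inv R) ** transpose R = mat 1"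
    using inv_facts[OF R_inv] by (metis matrix_transpose_mul transpose_mat)
  hence "transpose (matrix_inv R) ** ((transpose R ** H ** R) ** M) ** matrix_inv R
      = (transpose (matrix_inv R) ** transpose R) ** H ** R ** M ** matrix_inv R"
    by (simp add: matrix_mul_assoc)
  also have "\<dots> = H ** (R ** M ** matrix_inv R)"
    using \<open>transpose (matrix_inv R) ** transpose R = mat 1\<close> by (simp add: matrix_mul_assoc)
  finally show ?thesis by simp
qed

lemma tr_congr: "transpose (transpose P ** X ** P) = transpose P ** transpose X ** (P::real^'n^'n)"
  by (simp add: matrix_transpose_mul matrix_mul_assoc)

lemma sym_conj:
  fixes R H :: "real^'n^'n"
  assumes R_inv: "invertible R" and H_sym: "transpose H = H"
    and Dd: "\<And>i j. i \<noteq> j \<Longrightarrow> (transpose R ** H ** R) $ i $ j = 0"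
  shows "transpose (H ** (R ** diag_mat m ** matrix_inv R)) = H ** (R ** diag_mat m ** matrix_inv R)"
proof -
  let ?D = "transpose R ** H ** R"
  have comm: "?D ** diag_mat m = diag_mat m ** ?D"
  proof -
    have "?D $ i $ j * m j = m i * ?D $ i $ j" for i j
      using Dd[of i j] by (cases "i = j") auto
    thus ?thesis unfolding vec_eq_iff by (simp add: mult_diag_right mult_diag_left)
  qed
  have tr: "transpose (?D ** diag_mat m) = ?D ** diag_mat m"
  proof -
    have "transpose (?D ** diag_mat m) = diag_mat m ** transpose ?D"
      by (subst matrix_transpose_mul) (simp add: transpose_diag)
    also have "\<dots> = ?D ** diag_mat m" using D_sym[OF H_sym] comm by simp
    finally show ?thesis .
  qed
  show ?thesis
    unfolding H_repr[OF R_inv] by (simp only: tr_congr tr)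
qed

lemma D_diag_nonneg:
  fixes R H :: "real^'n^'n"
  assumes H_pd: "\<forall>y::real^'n. y \<noteq> 0 \<longrightarrow> y \<bullet> (H *v y) > 0"
  shows "(transpose R ** H ** R) $ i $ i \<ge> 0"
proof -
  let ?e = "axis i (1::real) :: real^'n"
  have "(transpose R ** H ** R) $ i $ i = ?e \<bullet> ((transpose R ** H ** R) *v ?e)"
    by (simp add: inner_commute[of "axis i 1"] cart_eq_inner_axis[symmetric] matrix_vector_mult_basis column_def)
  also have "\<dots> = (R *v ?e) \<bullet> (H *v (R *v ?e))"
    by (simp add: matrix_vector_mul_assoc[symmetric] dot_vmul)
  also have "\<dots> \<ge> 0" using H_pd
    by (metis inner_zero_left order_less_imp_le order_refl)
  finally show ?thesis .
qed

lemma psd_conj: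
  fixes R H :: "real^'n^'n"
  assumes R_inv: "invertible R" and H_sym: "transpose H = H"
    and H_pd: "\<forall>y::real^'n. y \<noteq> 0 \<longrightarrow> y \<bullet> (H *v y) > 0"
    and Dd: "\<And>i j. i \<noteq> j \<Longrightarrow> (transpose R ** H ** R) $ i $ j = 0"
    and m: "\<And>i. m i \<ge> 0"
  shows "y \<bullet> ((H ** (R ** diag_mat m ** matrix_inv R)) *v y) \<ge> 0"
proof -
  let ?D = "transpose R ** H ** R"
  define z where "z = matrix_inv R *v y"
  have ent: "(?D ** diag_mat m) $ i $ j = (if i = j then ?D $ i $ i * m i else 0)" for i j
    using Dd by (auto simp: mult_diag_right)
  have "y \<bullet> ((H ** (R ** diag_mat m ** matrix_inv R)) *v y) = z \<bullet> ((?D ** diag_mat m) *v z)"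
    unfolding H_repr[OF R_inv] z_def
    by (simp add: matrix_vector_mul_assoc[symmetric] dot_vmul)
  also have "\<dots> = (\<Sum>i\<in>UNIV. z $ i * (?D $ i $ i * m i * z $ i))"
    unfolding inner_vec_def matrix_vector_mult_def
    by (simp add: ent if_distrib if_distribR cong: if_cong)
  also have "\<dots> \<ge> 0"
    by (intro sum_nonneg) (metis D_diag_nonneg[OF H_pd] m mult.commute mult.left_commute mult_nonneg_nonneg zero_le_square)
  finally show ?thesis .
qed

lemma matrix_add_rdistrib': "((A::real^'n^'m) + B) ** C = A ** C + B ** C"
  by (simp add: matrix_matrix_mult_def vec_eq_iff sum.distrib distrib_right)

lemma scal_mid: "(A::real^'n^'m) ** (k *\<^sub>R M) ** B = k *\<^sub>R (A ** M ** B)"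
  by (metis matrix_scalar_ac scalar_matrix_assoc)

lemma mat_scal_right: "(A::real^'n^'m) ** (k *\<^sub>R B) = k *\<^sub>R (A ** B)"
  by (metis matrix_scalar_ac scalar_matrix_assoc)

lemma slow_decomp:
  fixes R :: "real^'n^'n"
  shows "slow_op R lam \<Gamma> x =
     R ** diag_mat (\<lambda>i. if lam i \<le> 0 then lam i else 0) ** matrix_inv R
     + \<Gamma> x *\<^sub>R (R ** diag_mat (\<lambda>i. if lam i \<le> 0 then 0 else lam i) ** matrix_inv R)"
proof -
  have "diag_mat (slowed_eig \<Gamma> lam x) = diag_mat (\<lambda>i. if lam i \<le> 0 then lam i else 0)
     + \<Gamma> x *\<^sub>R diag_mat (\<lambda>i. if lam i \<le> 0 then 0 else lam i)"
    by (simp add: vec_eq_iff diag_mat_def slowed_eig_def)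
  thus ?thesis
    unfolding slow_op_def
    by (simp add: matrix_add_ldistrib matrix_add_rdistrib' scal_mid)
qed

lemma Gamma_facts:
  fixes \<Gamma> :: "real \<Rightarrow> real"
  assumes \<Gamma>_C1: "\<Gamma> C1_differentiable_on UNIV"
    and \<Gamma>_noninc: "antimono \<Gamma>"
    and \<Gamma>_left: "\<forall>x\<le>xs. \<Gamma> x = 1"
    and \<Gamma>_right: "\<forall>x\<ge>xinf. \<Gamma> x = \<Gamma> xinf"
  shows "\<And>x. (\<Gamma> has_field_derivative vector_derivative \<Gamma> (at x)) (at x)"
    and "continuous_on UNIV (\<lambda>x. vector_derivative \<Gamma> (at x))"
    and "\<And>x. vector_derivative \<Gamma> (at x) \<le> 0"
    and "\<And>x. x < xs \<or> x > xinf \<Longrightarrow> vector_derivative \<Gamma> (at x) = 0"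
proof -
  have d: "\<Gamma> differentiable at x" for x
    using C1_differentiable_on_eq[THEN iffD1, OF \<Gamma>_C1] by blast
  have c: "continuous_on UNIV (\<lambda>x. vector_derivative \<Gamma> (at x))"
    using C1_differentiable_on_eq[THEN iffD1, OF \<Gamma>_C1] by (rule conjunct2)
  show der: "(\<Gamma> has_field_derivative vector_derivative \<Gamma> (at x)) (at x)" for x
    unfolding has_real_derivative_iff_has_vector_derivative
    using d[of x] vector_derivative_works by blast
  show "continuous_on UNIV (\<lambda>x. vector_derivative \<Gamma> (at x))" by (rule c)
  show "vector_derivative \<Gamma> (at x) \<le> 0" for x
  proof (rule ccontr)
    assume "\<not> ?thesis"
    hence pos: "vector_derivative \<Gamma> (at x) > 0" by simp
    obtain d where "d > 0" "\<forall>h>0. h < d \<longrightarrow> \<Gamma> x < \<Gamma> (x + h)"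
      using DERIV_pos_inc_right[OF der[of x] pos] by blast
    hence "\<Gamma> x < \<Gamma> (x + d/2)" by simp
    moreover have "\<Gamma> (x + d/2) \<le> \<Gamma> x" using antimonoD[OF \<Gamma>_noninc, of x "x + d/2"] \<open>d > 0\<close> by simp
    ultimately show False by simp
  qed
  show "vector_derivative \<Gamma> (at x) = 0" if "x < xs \<or> x > xinf" for x
    using that
  proof
    assume "x < xs"
    have "((\<lambda>_. 1) has_field_derivative 0) (at x)" by (rule DERIV_const)
    moreover have "open {..<xs}" by simp
    moreover have "x \<in> {..<xs}" using \<open>x < xs\<close> by simp
    moreover have "\<And>y. y \<in> {..<xs} \<Longrightarrow> (\<lambda>_. 1) y = \<Gamma> y" using \<Gamma>_left by simp
    ultimately have "(\<Gamma> has_field_derivative 0) (at x)"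
      by (rule has_field_derivative_transform_within_open)
    thus ?thesis using der[of x] DERIV_unique by blast
  next
    assume "x > xinf"
    have "((\<lambda>_. \<Gamma> xinf) has_field_derivative 0) (at x)" by (rule DERIV_const)
    moreover have "open {xinf<..}" by simp
    moreover have "x \<in> {xinf<..}" using \<open>x > xinf\<close> by simp
    moreover have "\<And>y. y \<in> {xinf<..} \<Longrightarrow> (\<lambda>_. \<Gamma> xinf) y = \<Gamma> y"
      using \<Gamma>_right by (metis greaterThan_iff less_imp_le)
    ultimately have "(\<Gamma> has_field_derivative 0) (at x)"
      by (rule has_field_derivative_transform_within_open)
    thus ?thesis using der[of x] DERIV_unique by blast
  qed
qed

lemma slow_deriv:
  fixes R :: "real^'n^'n"
  assumes "(\<Gamma> has_field_derivative g) (at x)"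
  shows "(slow_op R lam \<Gamma> has_vector_derivative
           g *\<^sub>R (R ** diag_mat (\<lambda>i. if lam i \<le> 0 then 0 else lam i) ** matrix_inv R)) (at x)"
  unfolding slow_decomp[abs_def]
  using has_vector_derivative_add[OF has_vector_derivative_const
      has_vector_derivative_scaleR[OF assms has_vector_derivative_const]]
  by simp

lemma quad_deriv:
  fixes u :: "real \<Rightarrow> real^'n" and P :: "real^'n^'n"
  assumes "(u has_vector_derivative u') (at x within S)"
  shows "((\<lambda>x. u x \<bullet> (P *v u x)) has_vector_derivative (u x \<bullet> (P *v u') + u' \<bullet> (P *v u x))) (at x within S)"
proof -
  have "((\<lambda>x. P *v u x) has_vector_derivative P *v u') (at x within S)"
    by (rule bounded_linear.has_vector_derivative[OF matrix_vector_mul_bounded_linear assms])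
  from bounded_bilinear.has_vector_derivative[OF bounded_bilinear_inner assms this] show ?thesis .
qed

lemma mv_cont[continuous_intros]:
  "continuous_on S f \<Longrightarrow> continuous_on S (\<lambda>x. (A::real^'n^'m) *v f x)"
  by (rule bounded_linear.continuous_on[OF matrix_vector_mul_bounded_linear])

lemma slice_cont:
  assumes "continuous_on ({0..T} \<times> UNIV) (\<lambda>(t, x). f t x)" "t \<in> {0..T}"
  shows "continuous_on S (f t)"
proof -
  have "continuous_on S ((\<lambda>(t, x). f t x) \<circ> (\<lambda>x. (t, x)))"
    by (rule continuous_on_compose) (use assms(2) in \<open>auto intro!: continuous_intros continuous_on_subset[OF assms(1)]\<close>)
  thus ?thesis by (simp add: o_def)
qed

lemma mv_neg: "(A::real^'n^'m) *v (- v) = - (A *v v)"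
  by (simp add: matrix_vector_mult_def vec_eq_iff sum_negf)

lemma quad_sym: "transpose P = P \<Longrightarrow> u \<bullet> (P *v w) = w \<bullet> (P *v (u::real^'n))"
  by (metis dot_transpose inner_commute)

theorem mainTheorem5:
  fixes A R H :: "real^'n^'n"
    and lam :: "'n \<Rightarrow> real"
    and \<Gamma> :: "real \<Rightarrow> real"
    and xs xinf :: real
  assumes R_inv: "invertible R"
    and lam_distinct: "inj lam"
    and A_diag: "A = R ** diag_mat lam ** matrix_inv R"
    and H_sym: "transpose H = H"
    and H_pd: "\<forall>y::real^'n. y \<noteq> 0 \<longrightarrow> y \<bullet> (H *v y) > 0"
    and HA_sym: "transpose (H ** A) = H ** A"
    and xs_less: "xs < xinf"
    and \<Gamma>_C1: "\<Gamma> C1_differentiable_on UNIV"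
    and \<Gamma>_noninc: "antimono \<Gamma>"
    and \<Gamma>_left: "\<forall>x\<le>xs. \<Gamma> x = 1"
    and \<Gamma>_right: "\<forall>x\<ge>xinf. \<Gamma> x = \<Gamma> xinf"
  shows "(\<forall>x. transpose (H ** slow_op R lam \<Gamma> x) = H ** slow_op R lam \<Gamma> x
            \<and> slow_op R lam \<Gamma> differentiable (at x)
            \<and> transpose (H ** vector_derivative (slow_op R lam \<Gamma>) (at x))
                = H ** vector_derivative (slow_op R lam \<Gamma>) (at x)
            \<and> (\<forall>y::real^'n. y \<bullet> ((H ** vector_derivative (slow_op R lam \<Gamma>) (at x)) *v y) \<le> 0))
    \<and> (\<forall>(T::real) (q :: real \<Rightarrow> real \<Rightarrow> real^'n) (qt :: real \<Rightarrow> real \<Rightarrow> real^'n)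
         (qx :: real \<Rightarrow> real \<Rightarrow> real^'n) (K :: real set).
         T > 0
         \<and> (\<forall>t\<in>{0..T}. \<forall>x. ((\<lambda>s. q s x) has_vector_derivative qt t x) (at t within {0..T}))
         \<and> (\<forall>t\<in>{0..T}. \<forall>x. ((\<lambda>y. q t y) has_vector_derivative qx t x) (at x))
         \<and> continuous_on ({0..T} \<times> UNIV) (\<lambda>(t, x). q t x)
         \<and> continuous_on ({0..T} \<times> UNIV) (\<lambda>(t, x). qt t x)
         \<and> continuous_on ({0..T} \<times> UNIV) (\<lambda>(t, x). qx t x)
         \<and> (\<forall>t\<in>{0..T}. \<forall>x. qt t x + slow_op R lam \<Gamma> x *v qx t x = 0)
         \<and> compact K
         \<and> (\<forall>t\<in>{0..T}. \<forall>x. x \<notin> K \<longrightarrow> q t x = 0)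
         \<longrightarrow> (\<forall>t\<in>{0..T}.
               ((\<lambda>s. integral UNIV (\<lambda>x. (1/2) * (q s x \<bullet> (H *v q s x))))
                  has_real_derivative
                  ((1/2) * integral {xs..xinf}
                     (\<lambda>x. q t x \<bullet> ((H ** vector_derivative (slow_op R lam \<Gamma>) (at x)) *v q t x))))
                 (at t within {0..T})
               \<and> (1/2) * integral {xs..xinf}
                     (\<lambda>x. q t x \<bullet> ((H ** vector_derivative (slow_op R lam \<Gamma>) (at x)) *v q t x)) \<le> 0))"
proof -
  define \<Gamma>d where "\<Gamma>d x = vector_derivative \<Gamma> (at x)" for x
  note GF = Gamma_facts[OF \<Gamma>_C1 \<Gamma>_noninc \<Gamma>_left \<Gamma>_right, folded \<Gamma>d_def]
  define a0 where "a0 = (\<lambda>i. if lam i \<le> 0 then lam i else 0)"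
  define b0 where "b0 = (\<lambda>i. if lam i \<le> 0 then 0 else lam i)"
  define C0 where "C0 = R ** diag_mat a0 ** matrix_inv R"
  define C1 where "C1 = R ** diag_mat b0 ** matrix_inv R"
  define P0 where "P0 = H ** C0"
  define P1 where "P1 = H ** C1"
  have Dd: "\<And>i j. i \<noteq> j \<Longrightarrow> (transpose R ** H ** R) $ i $ j = 0"
    by (rule D_diag[OF R_inv lam_distinct A_diag H_sym HA_sym])
  have P0sym: "transpose P0 = P0" unfolding P0_def C0_def by (rule sym_conj[OF R_inv H_sym Dd])
  have P1sym: "transpose P1 = P1" unfolding P1_def C1_def by (rule sym_conj[OF R_inv H_sym Dd])
  have P1psd: "\<And>y. y \<bullet> (P1 *v y) \<ge> 0" unfolding P1_def C1_def
    by (rule psd_conj[OF R_inv H_sym H_pd Dd]) (auto simp: b0_def)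
  have sd: "\<And>x. (slow_op R lam \<Gamma> has_vector_derivative \<Gamma>d x *\<^sub>R C1) (at x)"
    unfolding C1_def b0_def by (rule slow_deriv[OF GF(1)])
  have vd: "\<And>x. vector_derivative (slow_op R lam \<Gamma>) (at x) = \<Gamma>d x *\<^sub>R C1"
    using sd by (rule vector_derivative_at)
  have Hvd: "\<And>x. H ** vector_derivative (slow_op R lam \<Gamma>) (at x) = \<Gamma>d x *\<^sub>R P1"
    by (simp add: vd P1_def mat_scal_right)
  have HS: "\<And>x. H ** slow_op R lam \<Gamma> x = P0 + \<Gamma> x *\<^sub>R P1"
    by (simp add: slow_decomp P0_def P1_def C0_def C1_def a0_def b0_def matrix_add_ldistrib mat_scal_right)
  have part1: "\<forall>x. transpose (H ** slow_op R lam \<Gamma> x) = H ** slow_op R lam \<Gamma> x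
            \<and> slow_op R lam \<Gamma> differentiable (at x)
            \<and> transpose (H ** vector_derivative (slow_op R lam \<Gamma>) (at x))
                = H ** vector_derivative (slow_op R lam \<Gamma>) (at x)
            \<and> (\<forall>y::real^'n. y \<bullet> ((H ** vector_derivative (slow_op R lam \<Gamma>) (at x)) *v y) \<le> 0)"
  proof
    fix x
    show "transpose (H ** slow_op R lam \<Gamma> x) = H ** slow_op R lam \<Gamma> x
            \<and> slow_op R lam \<Gamma> differentiable (at x)
            \<and> transpose (H ** vector_derivative (slow_op R lam \<Gamma>) (at x))
                = H ** vector_derivative (slow_op R lam \<Gamma>) (at x)
            \<and> (\<forall>y::real^'n. y \<bullet> ((H ** vector_derivative (slow_op R lam \<Gamma>) (at x)) *v y) \<le> 0)"
    proof (intro conjI allI)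
      show "transpose (H ** slow_op R lam \<Gamma> x) = H ** slow_op R lam \<Gamma> x"
        unfolding slow_op_def by (rule sym_conj[OF R_inv H_sym Dd])
      show "slow_op R lam \<Gamma> differentiable (at x)" using sd by (rule differentiableI_vector)
      show "transpose (H ** vector_derivative (slow_op R lam \<Gamma>) (at x))
                = H ** vector_derivative (slow_op R lam \<Gamma>) (at x)"
        by (simp add: Hvd transpose_scalar P1sym)
      fix y :: "real^'n"
      have "y \<bullet> ((H ** vector_derivative (slow_op R lam \<Gamma>) (at x)) *v y) = \<Gamma>d x * (y \<bullet> (P1 *v y))"
        by (simp add: Hvd scaleR_matrix_vector_assoc[symmetric])
      also have "\<dots> \<le> 0" using GF(3)[of x] P1psd[of y] by (rule mult_nonpos_nonneg)
      finally show "y \<bullet> ((H ** vector_derivative (slow_op R lam \<Gamma>) (at x)) *v y) \<le> 0" .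
    qed
  qed
  have part2: "\<forall>(T::real) (q :: real \<Rightarrow> real \<Rightarrow> real^'n) (qt :: real \<Rightarrow> real \<Rightarrow> real^'n)
         (qx :: real \<Rightarrow> real \<Rightarrow> real^'n) (K :: real set).
         T > 0
         \<and> (\<forall>t\<in>{0..T}. \<forall>x. ((\<lambda>s. q s x) has_vector_derivative qt t x) (at t within {0..T}))
         \<and> (\<forall>t\<in>{0..T}. \<forall>x. ((\<lambda>y. q t y) has_vector_derivative qx t x) (at x))
         \<and> continuous_on ({0..T} \<times> UNIV) (\<lambda>(t, x). q t x)
         \<and> continuous_on ({0..T} \<times> UNIV) (\<lambda>(t, x). qt t x)
         \<and> continuous_on ({0..T} \<times> UNIV) (\<lambda>(t, x). qx t x)
         \<and> (\<forall>t\<in>{0..T}. \<forall>x. qt t x + slow_op R lam \<Gamma> x *v qx t x = 0)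
         \<and> compact K
         \<and> (\<forall>t\<in>{0..T}. \<forall>x. x \<notin> K \<longrightarrow> q t x = 0)
         \<longrightarrow> (\<forall>t\<in>{0..T}.
               ((\<lambda>s. integral UNIV (\<lambda>x. (1/2) * (q s x \<bullet> (H *v q s x))))
                  has_real_derivative
                  ((1/2) * integral {xs..xinf}
                     (\<lambda>x. q t x \<bullet> ((H ** vector_derivative (slow_op R lam \<Gamma>) (at x)) *v q t x))))
                 (at t within {0..T})
               \<and> (1/2) * integral {xs..xinf}
                     (\<lambda>x. q t x \<bullet> ((H ** vector_derivative (slow_op R lam \<Gamma>) (at x)) *v q t x)) \<le> 0)"
  proof (intro allI impI ballI, elim conjE)
    fix T :: real and q qt qx :: "real \<Rightarrow> real \<Rightarrow> real^'n" and K :: "real set" and t :: real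
    assume T0: "T > 0"
      and dq: "\<forall>t\<in>{0..T}. \<forall>x. ((\<lambda>s. q s x) has_vector_derivative qt t x) (at t within {0..T})"
      and dqx: "\<forall>t\<in>{0..T}. \<forall>x. ((\<lambda>y. q t y) has_vector_derivative qx t x) (at x)"
      and cq: "continuous_on ({0..T} \<times> UNIV) (\<lambda>(t, x). q t x)"
      and cqt: "continuous_on ({0..T} \<times> UNIV) (\<lambda>(t, x). qt t x)"
      and cqx: "continuous_on ({0..T} \<times> UNIV) (\<lambda>(t, x). qx t x)"
      and pde: "\<forall>t\<in>{0..T}. \<forall>x. qt t x + slow_op R lam \<Gamma> x *v qx t x = 0"
      and Kc: "compact K"
      and Ksupp: "\<forall>t\<in>{0..T}. \<forall>x. x \<notin> K \<longrightarrow> q t x = 0"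
      and t: "t \<in> {0..T}"
    obtain B where B: "\<forall>x\<in>K. \<bar>x\<bar> \<le> B"
      using compact_imp_bounded[OF Kc] unfolding bounded_real by blast
    define a where "a = min xs (- \<bar>B\<bar> - 1)"
    define b where "b = max xinf (\<bar>B\<bar> + 1)"
    have ab: "a \<le> xs" "xinf \<le> b" "a \<le> b" using xs_less by (auto simp: a_def b_def)
    have out: "q s x = 0" if "s \<in> {0..T}" "x \<notin> {a<..<b}" for s x
    proof -
      have "x \<notin> K"
      proof
        assume "x \<in> K"
        hence "\<bar>x\<bar> \<le> B" using B by blast
        with that(2) show False by (auto simp: a_def b_def)
      qed
      thus ?thesis using Ksupp that(1) by blast
    qed
    have qa: "q t a = 0" and qb: "q t b = 0" using out[OF t] by auto
    have cqs: "continuous_on S (q s)" if "s \<in> {0..T}" for s S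
      by (rule slice_cont[OF cq that])
    have cqts: "continuous_on S (qt s)" if "s \<in> {0..T}" for s S
      by (rule slice_cont[OF cqt that])
    have cqxs: "continuous_on S (qx s)" if "s \<in> {0..T}" for s S
      by (rule slice_cont[OF cqx that])
    have cG: "continuous_on S \<Gamma>" for S
      using GF(1) by (meson DERIV_isCont continuous_at_imp_continuous_on)
    have cGd: "continuous_on S \<Gamma>d" for S
      using GF(2) by (rule continuous_on_subset) simp
    define f where "f s x = (1/2) * (q s x \<bullet> (H *v q s x))" for s x
    define fx where "fx s x = q s x \<bullet> (H *v qt s x)" for s x
    have fder: "((\<lambda>s. f s x) has_field_derivative fx s x) (at s within {0..T})"
      if "s \<in> {0..T}" "x \<in> cbox a b" for s x
    proof -
      have "((\<lambda>s. q s x \<bullet> (H *v q s x)) has_vector_derivative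
              (q s x \<bullet> (H *v qt s x) + qt s x \<bullet> (H *v q s x))) (at s within {0..T})"
        by (rule quad_deriv) (use dq that in blast)
      hence "((\<lambda>s. q s x \<bullet> (H *v q s x)) has_field_derivative
              (q s x \<bullet> (H *v qt s x) + qt s x \<bullet> (H *v q s x))) (at s within {0..T})"
        by (simp add: has_real_derivative_iff_has_vector_derivative)
      from DERIV_cmult[OF this, of "1/2"]
      have "((\<lambda>s. f s x) has_field_derivative
              (1/2) * (q s x \<bullet> (H *v qt s x) + qt s x \<bullet> (H *v q s x))) (at s within {0..T})"
        by (simp add: f_def)
      moreover have "(1/2) * (q s x \<bullet> (H *v qt s x) + qt s x \<bullet> (H *v q s x)) = fx s x"
        using quad_sym[OF H_sym, of "qt s x" "q s x"] by (simp add: fx_def)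
      ultimately show ?thesis by simp
    qed
    have fint: "f s integrable_on cbox a b" if "s \<in> {0..T}" for s
      unfolding f_def using that
      by (intro integrable_continuous continuous_intros cqs)
    have cfx: "continuous_on ({0..T} \<times> cbox a b) (\<lambda>(s, x). fx s x)"
    proof -
      have "continuous_on ({0..T} \<times> cbox a b) (\<lambda>p. case_prod q p \<bullet> (H *v case_prod qt p))"
        by (intro continuous_intros continuous_on_subset[OF cq] continuous_on_subset[OF cqt]) auto
      moreover have "(\<lambda>p. case_prod q p \<bullet> (H *v case_prod qt p)) = (\<lambda>(s, x). fx s x)"
        by (simp add: fun_eq_iff fx_def split: prod.split)
      ultimately show ?thesis by metis
    qed
    have L: "((\<lambda>s. integral (cbox a b) (f s)) has_field_derivative integral (cbox a b) (fx t))
              (at t within {0..T})"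
      by (rule leibniz_rule_field_derivative[OF fder fint cfx t]) (auto simp: convex_real_interval)
    have EU: "integral UNIV (\<lambda>x. (1/2) * (q s x \<bullet> (H *v q s x))) = integral (cbox a b) (f s)"
      if "s \<in> {0..T}" for s
    proof -
      have "(\<lambda>x. (1/2) * (q s x \<bullet> (H *v q s x))) = (\<lambda>x. if x \<in> cbox a b then f s x else 0)"
        using out[OF that] by (auto simp: fun_eq_iff f_def)
      thus ?thesis using integral_restrict_UNIV[of "cbox a b" "f s"] by simp
    qed
    have L2: "((\<lambda>s. integral UNIV (\<lambda>x. (1/2) * (q s x \<bullet> (H *v q s x)))) has_field_derivative
               integral (cbox a b) (fx t)) (at t within {0..T})"
      unfolding has_field_derivative_def
      by (rule has_derivative_transform[OF t _ L[unfolded has_field_derivative_def]], erule EU)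
    define h1 where "h1 x = q t x \<bullet> (P0 *v qx t x) + \<Gamma> x * (q t x \<bullet> (P1 *v qx t x))" for x
    define h2 where "h2 x = \<Gamma>d x * (q t x \<bullet> (P1 *v q t x))" for x
    have ch1: "continuous_on S h1" for S
      unfolding h1_def using t by (intro continuous_intros cqs cqxs cG)
    have ch2: "continuous_on S h2" for S
      unfolding h2_def using t by (intro continuous_intros cqs cGd)
    have fx_h1: "fx t x = - h1 x" for x
    proof -
      have "qt t x + slow_op R lam \<Gamma> x *v qx t x = 0" using pde t by blast
      hence "qt t x = - (slow_op R lam \<Gamma> x *v qx t x)" by (simp add: eq_neg_iff_add_eq_0)
      hence "H *v qt t x = - ((H ** slow_op R lam \<Gamma> x) *v qx t x)"
        by (simp only: mv_neg matrix_vector_mul_assoc)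
      thus ?thesis
        by (simp add: fx_def h1_def HS matrix_vector_mult_add_rdistrib scaleR_matrix_vector_assoc[symmetric] inner_add_right inner_diff_right inner_minus_right)
    qed
    have tgt_h2: "q t x \<bullet> ((H ** vector_derivative (slow_op R lam \<Gamma>) (at x)) *v q t x) = h2 x" for x
      by (simp add: h2_def Hvd scaleR_matrix_vector_assoc[symmetric])
    define g where "g x = q t x \<bullet> (P0 *v q t x) + \<Gamma> x * (q t x \<bullet> (P1 *v q t x))" for x
    have gder: "(g has_vector_derivative (2 * h1 x + h2 x)) (at x within {a..b})" for x
    proof -
      have dQ: "((\<lambda>y. q t y) has_vector_derivative qx t x) (at x within {a..b})"
        using dqx t by (blast intro: has_vector_derivative_at_within)
      have dG: "(\<Gamma> has_vector_derivative \<Gamma>d x) (at x within {a..b})"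
        using GF(1)[of x] by (simp add: has_real_derivative_iff_has_vector_derivative has_vector_derivative_at_within)
      have "(g has_vector_derivative
          ((q t x \<bullet> (P0 *v qx t x) + qx t x \<bullet> (P0 *v q t x))
           + (\<Gamma> x * (q t x \<bullet> (P1 *v qx t x) + qx t x \<bullet> (P1 *v q t x)) + \<Gamma>d x * (q t x \<bullet> (P1 *v q t x)))))
          (at x within {a..b})"
        unfolding g_def[abs_def]
        by (intro has_vector_derivative_add has_vector_derivative_mult dG quad_deriv dQ)
      moreover have "(q t x \<bullet> (P0 *v qx t x) + qx t x \<bullet> (P0 *v q t x))
           + (\<Gamma> x * (q t x \<bullet> (P1 *v qx t x) + qx t x \<bullet> (P1 *v q t x)) + \<Gamma>d x * (q t x \<bullet> (P1 *v q t x)))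
           = 2 * h1 x + h2 x"
        using quad_sym[OF P0sym, of "qx t x" "q t x"] quad_sym[OF P1sym, of "qx t x" "q t x"]
        by (simp add: h1_def h2_def algebra_simps)
      ultimately show ?thesis by simp
    qed
    have FTC: "((\<lambda>x. 2 * h1 x + h2 x) has_integral (g b - g a)) {a..b}"
      by (rule fundamental_theorem_of_calculus[OF ab(3)]) (rule gder)
    have gab: "g b - g a = 0" by (simp add: g_def qa qb)
    have I1: "(h1 has_integral integral {a..b} h1) {a..b}"
      using ch1 by (blast intro: integrable_continuous_interval integrable_integral)
    have I2: "(h2 has_integral integral {a..b} h2) {a..b}"
      using ch2 by (blast intro: integrable_continuous_interval integrable_integral)
    have "((\<lambda>x. 2 * h1 x + h2 x) has_integral (2 * integral {a..b} h1 + integral {a..b} h2)) {a..b}"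
      by (intro has_integral_add has_integral_mult_right I1 I2)
    hence rel: "2 * integral {a..b} h1 + integral {a..b} h2 = 0"
      using FTC gab has_integral_unique by metis
    have h2_out: "h2 x = (if x \<in> {xs..xinf} then h2 x else 0)" for x
      using GF(4)[of x] by (auto simp: h2_def)
    have I2r: "integral {a..b} h2 = integral {xs..xinf} h2"
    proof -
      have "integral {a..b} h2 = integral {a..b} (\<lambda>x. if x \<in> {xs..xinf} then h2 x else 0)"
        by (intro integral_cong) (rule h2_out)
      also have "\<dots> = integral ({xs..xinf} \<inter> {a..b}) h2" by (rule integral_restrict_Int)
      also have "{xs..xinf} \<inter> {a..b} = {xs..xinf}" using ab by auto
      finally show ?thesis .
    qed
    have tgt: "integral {xs..xinf} (\<lambda>x. q t x \<bullet> ((H ** vector_derivative (slow_op R lam \<Gamma>) (at x)) *v q t x))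
             = integral {xs..xinf} h2"
      by (simp add: tgt_h2)
    have val: "integral (cbox a b) (fx t)
       = (1/2) * integral {xs..xinf} (\<lambda>x. q t x \<bullet> ((H ** vector_derivative (slow_op R lam \<Gamma>) (at x)) *v q t x))"
    proof -
      have "fx t = (\<lambda>x. - h1 x)" by (rule ext) (rule fx_h1)
      hence "integral (cbox a b) (fx t) = - integral {a..b} h1" by simp
      thus ?thesis using rel I2r tgt by simp
    qed
    have h2nonpos: "h2 x \<le> 0" for x
      unfolding h2_def using GF(3)[of x] P1psd[of "q t x"] by (rule mult_nonpos_nonneg)
    have "0 \<le> integral {xs..xinf} (\<lambda>x. - h2 x)"
      using h2nonpos ch2 by (intro integral_nonneg integrable_continuous_interval continuous_intros) auto
    hence neg: "(1/2) * integral {xs..xinf} (\<lambda>x. q t x \<bullet> ((H ** vector_derivative (slow_op R lam \<Gamma>) (at x)) *v q t x)) \<le> 0"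
      using tgt by simp
    show "((\<lambda>s. integral UNIV (\<lambda>x. (1/2) * (q s x \<bullet> (H *v q s x))))
                  has_real_derivative
                  ((1/2) * integral {xs..xinf}
                     (\<lambda>x. q t x \<bullet> ((H ** vector_derivative (slow_op R lam \<Gamma>) (at x)) *v q t x))))
                 (at t within {0..T})
               \<and> (1/2) * integral {xs..xinf}
                     (\<lambda>x. q t x \<bullet> ((H ** vector_derivative (slow_op R lam \<Gamma>) (at x)) *v q t x)) \<le> 0"
      using L2[unfolded val] neg by (rule conjI)
  qed
  show ?thesis by (rule conjI[OF part1 part2])
qed

end
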